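(* Let $A,B\in\mathbb{R}^{m\times n}$ with $A\ne0$, $B\neq0$ and $\operatorname{rank}(A+B)>1$. Choose $(i,j)$ with $a_{i,j}\neq0$, and assume it is not the case that ($b_{i,j}\neq0$ and $\operatorname{rank}(A-\frac{a_{i,j}}{b_{i,j}}B)=1$). Define $\mathbf{r}_j(\lambda)=A^{(j)}+\lambda B^{(j)}$ and $\mathbf{c}_i(\lambda)^\mathsf{T}=\frac{1}{a_{i,j}+\lambda b_{i,j}}(A_{(i)}+\lambda B_{(i)})$ (for $a_{i,j}+\lambda b_{i,j}\neq0$), and $f_{s,t}(i,j;\lambda)=a_{s,t}+\lambda b_{s,t}-\frac{(a_{s,j}+\lambda b_{s,j})(a_{i,t}+\lambda b_{i,t})}{a_{i,j}+\lambda b_{i,j}}$. Pick any $(l,k)$ such that $f_{l,k}(i,j;\lambda)$ is not identically zero, and let $\hat\Lambda$ be the (at most two-element) set of $\hat\lambda\in\mathbb{C}$ with $a_{i,j}+\hat\lambda b_{i,j}\neq0$ and $f_{l,k}(i,j;\hat\lambda)=0$. Then there exists $\lambda^*\in\mathbb{C}$ with $\operatorname{rank}(A+\lambda^*B)=1$ if and only if some $\hat\lambda\in\hat\Lambda$ satisfies $A+\hat\lambda B=\mathbf{r}_j(\hat\lambda)\mathbf{c}_i(\hat\lambda)^\mathsf{T}$.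
   Context: For a matrix $M$, $M_{(i)}$ is its $i$-th row, $M^{(j)}$ its $j$-th column, and $m_{i,j}$ its $(i,j)$ entry. Ranks are over $\mathbb{C}$. A rational function is identically zero iff its numerator is the zero polynomial. *)

theory Defs
  imports "Jordan_Normal_Form.DL_Rank" "HOL-Computational_Algebra.Polynomial"
begin

definition crank :: "complex mat \<Rightarrow> nat" where
  "crank M = vec_space.rank (dim_row M) M"

definition cmat :: "real mat \<Rightarrow> complex mat" where
  "cmat A = map_mat complex_of_real A"

definition pencil :: "real mat \<Rightarrow> real mat \<Rightarrow> complex \<Rightarrow> complex mat" where
  "pencil A B lam = cmat A + lam \<cdot>\<^sub>m cmat B"

definition rvec :: "real mat \<Rightarrow> real mat \<Rightarrow> nat \<Rightarrow> complex \<Rightarrow> complex vec" where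
  "rvec A B j lam = col (pencil A B lam) j"

definition cvec :: "real mat \<Rightarrow> real mat \<Rightarrow> nat \<Rightarrow> nat \<Rightarrow> complex \<Rightarrow> complex vec" where
  "cvec A B i j lam =
     (1 / (complex_of_real (A $$ (i,j)) + lam * complex_of_real (B $$ (i,j)))) \<cdot>\<^sub>v row (pencil A B lam) i"

definition outer :: "complex vec \<Rightarrow> complex vec \<Rightarrow> complex mat" where
  "outer r c = mat (dim_vec r) (dim_vec c) (\<lambda>(s,t). r $ s * c $ t)"

definition fval :: "real mat \<Rightarrow> real mat \<Rightarrow> nat \<Rightarrow> nat \<Rightarrow> nat \<Rightarrow> nat \<Rightarrow> complex \<Rightarrow> complex" where
  "fval A B s t i j lam =
     (let e = (\<lambda>p q. complex_of_real (A $$ (p,q)) + lam * complex_of_real (B $$ (p,q)))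
      in e s t - e s j * e i t / e i j)"

text \<open>Numerator polynomial of f_{s,t}(i,j;lambda) (after multiplying by a_ij + lambda b_ij);
  the rational function f_{s,t}(i,j;.) is identically zero iff this polynomial is zero.\<close>
definition fnum :: "real mat \<Rightarrow> real mat \<Rightarrow> nat \<Rightarrow> nat \<Rightarrow> nat \<Rightarrow> nat \<Rightarrow> complex poly" where
  "fnum A B s t i j =
     (let e = (\<lambda>p q. [:complex_of_real (A $$ (p,q)), complex_of_real (B $$ (p,q)):])
      in e s t * e i j - e s j * e i t)"

end

theory Submission
  imports Defs
begin


context vec_space begin

lemma two_indpt:
  assumes u: "u \<in> carrier_vec n" and w: "w \<in> carrier_vec n" and p: "p < n" and q: "q < n"
    and D: "u $ p * w $ q \<noteq> u $ q * w $ p"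
  shows "lin_indpt {u, w}" "u \<noteq> w"
proof -
  show uw: "u \<noteq> w" using D by auto
  show "lin_indpt {u, w}"
  proof (rule finite_lin_indpt2)
    show "finite {u,w}" by simp
    show "{u,w} \<subseteq> carrier_vec n" using u w by simp
    fix a assume "True" and lc: "lincomb a {u,w} = 0\<^sub>v n"
    have "lincomb a {u,w} $ p = 0" "lincomb a {u,w} $ q = 0" using lc p q by auto
    then have e1: "a u * u $ p + a w * w $ p = 0" and e2: "a u * u $ q + a w * w $ q = 0"
      using lincomb_index[OF p, of "{u,w}" a] lincomb_index[OF q, of "{u,w}" a] u w uw by auto
    have "a u * (u $ p * w $ q - u $ q * w $ p) = w $ q * (a u * u $ p + a w * w $ p) - w $ p * (a u * u $ q + a w * w $ q)"
      by (simp add: algebra_simps)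
    then have "a u = 0" using e1 e2 D by simp
    moreover have "a w * (u $ p * w $ q - u $ q * w $ p) = u $ p * (a u * u $ q + a w * w $ q) - u $ q * (a u * u $ p + a w * w $ p)"
      by (simp add: algebra_simps)
    then have "a w = 0" using e1 e2 D by simp
    ultimately show "\<forall>v\<in>{u,w}. a v = 0" by simp
  qed
qed

lemma one_indpt:
  assumes u: "u \<in> carrier_vec n" and p: "p < n" and D: "u $ p \<noteq> 0"
  shows "lin_indpt {u}"
proof (rule finite_lin_indpt2)
  show "finite {u}" by simp
  show "{u} \<subseteq> carrier_vec n" using u by simp
  fix a assume "True" and lc: "lincomb a {u} = 0\<^sub>v n"
  have "lincomb a {u} $ p = 0" using lc p by auto
  then have "a u * u $ p = 0" using lincomb_index[OF p, of "{u}" a] u by auto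
  then show "\<forall>v\<in>{u}. a v = 0" using D by simp
qed

lemma rank_minor:
  assumes M: "M \<in> carrier_mat n nc" and s: "s < n" and p: "p < n" and t: "t < nc" and q: "q < nc"
    and D: "M $$ (p,q) * M $$ (s,t) \<noteq> M $$ (s,q) * M $$ (p,t)"
  shows "rank M \<ge> 2"
proof -
  have cq: "col M q \<in> carrier_vec n" "col M t \<in> carrier_vec n" using M by auto
  have D': "col M q $ p * col M t $ s \<noteq> col M q $ s * col M t $ p" using D M s p t q by auto
  note ind = two_indpt[OF cq p s D']
  have sub: "{col M q, col M t} \<subseteq> set (cols M)" using M t q by (auto simp: cols_def)
  have "card {col M q, col M t} = 2" using ind(2) by simp
  with rank_ge_card_indpt[OF M sub ind(1)] show ?thesis by simp
qed

lemma rank_nonzero: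
  assumes M: "M \<in> carrier_mat n nc" and s: "s < n" and t: "t < nc" and D: "M $$ (s,t) \<noteq> 0"
  shows "rank M \<ge> 1"
proof -
  have c: "col M t \<in> carrier_vec n" using M by auto
  have "col M t $ s \<noteq> 0" using M s t D by auto
  note ind = one_indpt[OF c s this]
  have sub: "{col M t} \<subseteq> set (cols M)" using M t by (auto simp: cols_def)
  from rank_ge_card_indpt[OF M sub ind] show ?thesis by simp
qed

end

lemma pencil_carrier: "A \<in> carrier_mat m n \<Longrightarrow> B \<in> carrier_mat m n \<Longrightarrow> pencil A B lam \<in> carrier_mat m n"
  by (simp add: pencil_def cmat_def)

lemma pencil_index: "A \<in> carrier_mat m n \<Longrightarrow> B \<in> carrier_mat m n \<Longrightarrow> s < m \<Longrightarrow> t < n \<Longrightarrow>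
   pencil A B lam $$ (s,t) = complex_of_real (A $$ (s,t)) + lam * complex_of_real (B $$ (s,t))"
  by (simp add: pencil_def cmat_def)

theorem mainTheorem7:
  fixes A B :: "real mat" and m n i j l k :: nat
  assumes "A \<in> carrier_mat m n" and "B \<in> carrier_mat m n"
    and "A \<noteq> 0\<^sub>m m n" and "B \<noteq> 0\<^sub>m m n"
    and "crank (pencil A B 1) > 1"
    and "i < m" and "j < n" and "A $$ (i,j) \<noteq> 0"
    and "\<not> (B $$ (i,j) \<noteq> 0 \<and>
              crank (pencil A B (- complex_of_real (A $$ (i,j) / B $$ (i,j)))) = 1)"
    and "l < m" and "k < n" and "fnum A B l k i j \<noteq> 0"
  shows "(\<exists>lam::complex. crank (pencil A B lam) = 1) \<longleftrightarrow>
         (\<exists>lh \<in> {lh::complex. complex_of_real (A $$ (i,j)) + lh * complex_of_real (B $$ (i,j)) \<noteq> 0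
                             \<and> fval A B l k i j lh = 0}.
            pencil A B lh = outer (rvec A B j lh) (cvec A B i j lh))"
proof
  note Ac = assms(1) and Bc = assms(2)
  have dimr: "dim_row (pencil A B lam) = m" for lam using pencil_carrier[OF Ac Bc] by auto
  have crk: "crank (pencil A B lam) = vec_space.rank m (pencil A B lam)" for lam
    unfolding crank_def dimr ..
  let ?e = "\<lambda>lam p q. complex_of_real (A $$ (p,q)) + lam * complex_of_real (B $$ (p,q))"
  assume "\<exists>lam::complex. crank (pencil A B lam) = 1"
  then obtain lam where r1: "crank (pencil A B lam) = 1" by blast
  let ?P = "pencil A B lam"
  have Pc: "?P \<in> carrier_mat m n" by (rule pencil_carrier[OF Ac Bc])
  have minor: "?P $$ (s,t) * ?P $$ (i,j) = ?P $$ (s,j) * ?P $$ (i,t)" if st: "s < m" "t < n" for s t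
  proof (rule ccontr)
    assume "\<not> ?thesis"
    hence "?P $$ (i,j) * ?P $$ (s,t) \<noteq> ?P $$ (s,j) * ?P $$ (i,t)" by (simp add: mult.commute)
    from vec_space.rank_minor[OF Pc st(1) assms(6) st(2) assms(7) this] r1 crk show False by simp
  qed
  have eij: "?e lam i j \<noteq> 0"
  proof
    assume z: "?e lam i j = 0"
    have b: "B $$ (i,j) \<noteq> 0" using z assms(8) by auto
    have "lam = - complex_of_real (A $$ (i,j) / B $$ (i,j))"
      using z b by (simp add: field_simps) (metis add_eq_0_iff mult.commute)
    with r1 b assms(9) show False by simp
  qed
  have Pij: "?P $$ (i,j) = ?e lam i j" using pencil_index[OF Ac Bc assms(6,7)] .
  have idx: "?P $$ (s,t) = ?e lam s t" if "s < m" "t < n" for s t using pencil_index[OF Ac Bc that] .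
  show "\<exists>lh \<in> {lh::complex. ?e lh i j \<noteq> 0 \<and> fval A B l k i j lh = 0}.
            pencil A B lh = outer (rvec A B j lh) (cvec A B i j lh)"
  proof (intro bexI[of _ lam] CollectI conjI)
    show "?e lam i j \<noteq> 0" by fact
    have "?e lam l k = ?e lam l j * ?e lam i k / ?e lam i j"
      using minor[OF assms(10,11)] idx[OF assms(10,11)] idx[OF assms(10,7)] idx[OF assms(6,11)] Pij eij
      by (simp add: field_simps)
    then show "fval A B l k i j lam = 0" unfolding fval_def Let_def by simp
    show "?P = outer (rvec A B j lam) (cvec A B i j lam)"
    proof (rule eq_matI)
      show "dim_row ?P = dim_row (outer (rvec A B j lam) (cvec A B i j lam))"
        using Pc by (simp add: outer_def rvec_def)
      show "dim_col ?P = dim_col (outer (rvec A B j lam) (cvec A B i j lam))"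
        using Pc by (simp add: outer_def cvec_def)
      fix s t assume "s < dim_row (outer (rvec A B j lam) (cvec A B i j lam))"
        "t < dim_col (outer (rvec A B j lam) (cvec A B i j lam))"
      hence st: "s < m" "t < n" using Pc by (auto simp: outer_def rvec_def cvec_def)
      have "outer (rvec A B j lam) (cvec A B i j lam) $$ (s,t) = ?P $$ (s,j) * (1 / ?e lam i j * ?P $$ (i,t))"
        using st Pc assms(6,7) by (simp add: outer_def rvec_def cvec_def)
      also have "\<dots> = ?P $$ (s,t)" using minor[OF st] Pij eij by (simp add: field_simps)
      finally show "?P $$ (s,t) = outer (rvec A B j lam) (cvec A B i j lam) $$ (s,t)" by simp
    qed
  qed
next
  note Ac = assms(1) and Bc = assms(2)
  have dimr: "dim_row (pencil A B lam) = m" for lam using pencil_carrier[OF Ac Bc] by auto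
  have crk: "crank (pencil A B lam) = vec_space.rank m (pencil A B lam)" for lam
    unfolding crank_def dimr ..
  assume "\<exists>lh \<in> {lh::complex. complex_of_real (A $$ (i,j)) + lh * complex_of_real (B $$ (i,j)) \<noteq> 0
                             \<and> fval A B l k i j lh = 0}.
            pencil A B lh = outer (rvec A B j lh) (cvec A B i j lh)"
  then obtain lh where e: "complex_of_real (A $$ (i,j)) + lh * complex_of_real (B $$ (i,j)) \<noteq> 0"
    and eq: "pencil A B lh = outer (rvec A B j lh) (cvec A B i j lh)" by blast
  let ?P = "pencil A B lh"
  have Pc: "?P \<in> carrier_mat m n" by (rule pencil_carrier[OF Ac Bc])
  have "vec_space.rank m ?P \<le> 1"
  proof (rule vec_space.rank_le_1_product_entries[OF Pc])
    fix r c assume "r < dim_row ?P" "c < dim_col ?P"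
    hence rc: "r < m" "c < n" using Pc by auto
    have dv: "dim_vec (rvec A B j lh) = m" "dim_vec (cvec A B i j lh) = n"
      using Pc by (auto simp: rvec_def cvec_def)
    show "?P $$ (r,c) = rvec A B j lh $ r * cvec A B i j lh $ c"
      by (subst eq) (simp add: outer_def dv rc)
  qed
  moreover have "vec_space.rank m ?P \<ge> 1"
    using vec_space.rank_nonzero[OF Pc assms(6,7)] pencil_index[OF Ac Bc assms(6,7)] e by simp
  ultimately show "\<exists>lam::complex. crank (pencil A B lam) = 1" using crk by (intro exI[of _ lh]) simp
qed

end
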